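(* Let $O\in\mathrm{O}(2S)$, let $1\le i\le S$ and $1\le j\le 2S$. Then there exist $W\in\mathrm{SpO}(2S,\mathbb{R})$ and a real number $\lambda\neq 0$ such that $(OW)_{l,2i-1}=\lambda\,(OW)_{l,2i}$ for every row index $l\neq j$; i.e. columns $2i-1$ and $2i$ of $OW$ are proportional with the same nonzero constant in all rows except row $j$.
   Context: Coordinates of $\mathbb{R}^{2S}$ are ordered as $(q_1,p_1,\dots,q_S,p_S)$. Let $\Omega=\bigoplus_{i=1}^S\begin{pmatrix}0&1\\-1&0\end{pmatrix}$. $\mathrm{O}(2S)$ is the orthogonal group and $\mathrm{SpO}(2S,\mathbb{R})$ is the group of real $2S\times2S$ matrices $W$ that are orthogonal and symplectic ($W^T\Omega W=\Omega$). *)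

theory Defs
  imports "Jordan_Normal_Form.Matrix"
begin

text \<open>Matrices are 0-indexed. Coordinates (q_1,p_1,...,q_S,p_S) correspond to
indices 0,1,...,2S-1; q_k has index 2k-2, p_k has index 2k-1.\<close>

definition Omega :: "nat \<Rightarrow> real mat" where
  "Omega S = mat (2*S) (2*S) (\<lambda>(a,b).
     if even a \<and> b = a + 1 then 1
     else if odd a \<and> a = b + 1 then -1 else 0)"

definition orthogonal_mat :: "nat \<Rightarrow> real mat \<Rightarrow> bool" where
  "orthogonal_mat n Q \<longleftrightarrow> Q \<in> carrier_mat n n \<and> transpose_mat Q * Q = 1\<^sub>m n"

definition SpO :: "nat \<Rightarrow> real mat set" where
  "SpO S = {W. orthogonal_mat (2*S) W \<and> transpose_mat W * Omega S * W = Omega S}"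

end

theory Submission imports Defs "Jordan_Normal_Form.Determinant" begin

lemma Omega_entry: "a < 2*S \<Longrightarrow> b < 2*S \<Longrightarrow> Omega S $$ (a,b) =
  (if even a \<and> b = a + 1 then 1 else if odd a \<and> a = b + 1 then -1 else 0)"
  by (simp add: Omega_def)

lemma Omega_carrier[simp]: "Omega S \<in> carrier_mat (2*S) (2*S)"
  by (simp add: Omega_def)

definition kv :: "(nat \<Rightarrow> real) \<Rightarrow> nat \<Rightarrow> real" where
  "kv f m = (if even m then f (Suc m) else - f (m - 1))"

lemma kv_kv[simp]: "kv (kv f) m = - f m"
  by (cases "even m") (auto simp: kv_def)

lemma sum_Omega_left: assumes "m < 2*S"
  shows "(\<Sum>l<2*S. Omega S $$ (m,l) * f l) = kv f m"
proof (cases "even m")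
  case True
  then have s: "Suc m < 2*S" using assms by presburger
  have "(\<Sum>l<2*S. Omega S $$ (m,l) * f l) = (\<Sum>l<2*S. if l = Suc m then f (Suc m) else 0)"
    using assms True by (intro sum.cong) (auto simp: Omega_entry)
  also have "\<dots> = f (Suc m)" using s by simp
  finally show ?thesis using True by (simp add: kv_def)
next
  case False
  then have s: "m - 1 < 2*S" "m \<ge> 1" using assms by presburger+
  have "(\<Sum>l<2*S. Omega S $$ (m,l) * f l) = (\<Sum>l<2*S. if l = m - 1 then - f (m - 1) else 0)"
    using assms False by (intro sum.cong) (auto simp: Omega_entry)
  also have "\<dots> = - f (m - 1)" using s by simp
  finally show ?thesis using False by (simp add: kv_def)
qed

lemma sum_Omega_right: assumes "k < 2*S"
  shows "(\<Sum>l<2*S. f l * Omega S $$ (l,k)) = - kv f k"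
proof (cases "even k")
  case True
  then have s: "Suc k < 2*S" using assms by presburger
  have "(\<Sum>l<2*S. f l * Omega S $$ (l,k)) = (\<Sum>l<2*S. if l = Suc k then - f (Suc k) else 0)"
    using assms True by (intro sum.cong) (auto simp: Omega_entry)
  also have "\<dots> = - f (Suc k)" using s by simp
  finally show ?thesis using True by (simp add: kv_def)
next
  case False
  then have s: "k - 1 < 2*S" "k \<ge> 1" using assms by presburger+
  have "(\<Sum>l<2*S. f l * Omega S $$ (l,k)) = (\<Sum>l<2*S. if l = k - 1 then f (k - 1) else 0)"
    using assms False by (intro sum.cong) (auto simp: Omega_entry)
  also have "\<dots> = f (k - 1)" using s by simp
  finally show ?thesis using False by (simp add: kv_def)
qed

lemma kv_swap: "(\<Sum>l<2*S. f l * kv g l) = - (\<Sum>l<2*S. kv f l * g l)"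
proof -
  have "(\<Sum>l<2*S. f l * kv g l) = (\<Sum>l<2*S. \<Sum>k<2*S. f l * Omega S $$ (l,k) * g k)"
    by (intro sum.cong refl) (simp add: sum_Omega_left[symmetric] sum_distrib_left mult.assoc)
  also have "\<dots> = (\<Sum>k<2*S. \<Sum>l<2*S. f l * Omega S $$ (l,k) * g k)"
    by (rule sum.swap)
  also have "\<dots> = (\<Sum>k<2*S. - kv f k * g k)"
    by (intro sum.cong refl) (simp add: sum_Omega_right[symmetric] sum_distrib_right)
  finally show ?thesis by (simp add: sum_negf)
qed


theorem lemma1:
  fixes S i j :: nat and Q :: "real mat"
  assumes "orthogonal_mat (2*S) Q"
    and "1 \<le> i" "i \<le> S"
    and "1 \<le> j" "j \<le> 2*S"
  shows "\<exists>W \<in> SpO S. \<exists>c::real. c \<noteq> 0 \<and>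
           (\<forall>l. 1 \<le> l \<and> l \<le> 2*S \<and> l \<noteq> j \<longrightarrow>
              (Q * W) $$ (l-1, 2*i-2) = c * (Q * W) $$ (l-1, 2*i-1))"
proof -
  define n where "n = 2*S"
  define a where "a = 2*i-2"
  define b where "b = 2*i-1"
  have ab: "b = Suc a" "b < n" "a < n" using assms unfolding a_def b_def n_def by auto
  have Qc: "Q \<in> carrier_mat n n" and QTQ: "transpose_mat Q * Q = 1\<^sub>m n"
    using assms(1) unfolding orthogonal_mat_def n_def by auto
  have QQT: "Q * transpose_mat Q = 1\<^sub>m n"
    by (rule mat_mult_left_right_inverse[OF _ Qc QTQ]) (use Qc in auto)
  define r where "r l = Q $$ (j-1, l)" for l
  have j1: "j - 1 < n" using assms unfolding n_def by auto
  have rQ: "(\<Sum>m<n. Q $$ (l',m) * r m) = (if l' = j-1 then 1 else 0)" if "l' < n" for l'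
  proof -
    have "(Q * transpose_mat Q) $$ (l', j-1) = 1\<^sub>m n $$ (l', j-1)" using QQT by simp
    then show ?thesis using that j1 Qc by (simp add: scalar_prod_def r_def atLeast0LessThan)
  qed
  have rr: "(\<Sum>m<n. r m * r m) = 1" using rQ[OF j1] by (simp add: r_def)
  define y0 where "y0 l = (if l = a \<or> l = b then 1 / sqrt 2 else 0)" for l
  define \<sigma> :: real where "\<sigma> = (if \<forall>l<n. r l = y0 l then -1 else 1)"
  define y where "y l = \<sigma> * y0 l" for l
  have ex: "\<exists>l0<n. y l0 \<noteq> r l0"
  proof (cases "\<forall>l<n. r l = y0 l")
    case True
    then have "y a \<noteq> r a" using ab by (simp add: y_def \<sigma>_def y0_def)
    then show ?thesis using ab by blast
  next
    case False
    then show ?thesis by (auto simp: y_def \<sigma>_def)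
  qed
  have yy: "(\<Sum>m<n. y m * y m) = 1"
  proof -
    have "(\<Sum>m<n. y m * y m) = (\<Sum>m<n. if m = a \<or> m = b then 1/2 else 0)"
      by (intro sum.cong refl) (auto simp: y_def y0_def \<sigma>_def)
    also have "\<dots> = (\<Sum>m\<in>{a,b}. 1/2)"
      using ab by (intro sum.mono_neutral_cong_right) auto
    also have "\<dots> = 1" using ab by simp
    finally show ?thesis .
  qed
  define w where "w l = y l - r l" for l
  define u where "u = kv w"
  define d where "d = (\<Sum>l<n. w l * w l)"
  define p where "p = (\<Sum>l<n. w l * y l)"
  define q where "q = (\<Sum>l<n. u l * y l)"
  have wu: "(\<Sum>l<n. w l * u l) = 0"
    using kv_swap[where S=S and f=w and g=w] unfolding u_def n_def by (simp add: mult.commute)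
  have uu: "(\<Sum>l<n. u l * u l) = d"
    using kv_swap[where S=S and f="kv w" and g=w] unfolding u_def n_def d_def by (simp add: sum_negf)
  have d2p: "d = 2 * p"
  proof -
    have "d - 2 * p = (\<Sum>l<n. r l * r l - y l * y l)"
      unfolding d_def p_def w_def by (simp add: sum_distrib_left sum_subtractf[symmetric] algebra_simps)
    also have "\<dots> = 0" using rr yy by (simp add: sum_subtractf)
    finally show ?thesis by simp
  qed
  obtain l0 where l0: "l0 < n" "w l0 \<noteq> 0" using ex unfolding w_def by auto
  have "w l0 * w l0 \<le> d" unfolding d_def
    using l0 by (intro member_le_sum) auto
  moreover have "w l0 * w l0 > 0" using l0 not_real_square_gt_zero by blast
  ultimately have dpos: "d > 0" by linarith
  define N where "N = p^2 + q^2"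
  have Npos: "N > 0" using dpos d2p unfolding N_def by (simp add: add_pos_nonneg)
  define \<alpha> where "\<alpha> = - p / N"
  define \<beta> where "\<beta> = q / N"
  define A where "A k = \<alpha> * w k - \<beta> * u k" for k
  define B where "B k = \<alpha> * u k + \<beta> * w k" for k
  define F where "F m k = (if m = k then 1 else 0) + w m * A k + u m * B k" for m k
  define W where "W = mat n n (\<lambda>(m,k). F m k)"
  have Wc: "W \<in> carrier_mat n n" unfolding W_def by simp
  have key: "d * (\<alpha>^2 + \<beta>^2) = - 2 * \<alpha>"
  proof -
    have "\<alpha>^2 + \<beta>^2 = N / N^2" unfolding \<alpha>_def \<beta>_def N_def
      by (simp add: power_divide add_divide_distrib)
    also have "\<dots> = 1 / N" using Npos by (simp add: power2_eq_square)
    finally show ?thesis using d2p Npos unfolding \<alpha>_def by simp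
  qed
  have orth: "transpose_mat W * W = 1\<^sub>m n"
  proof (rule eq_matI)
    fix m k assume mk: "m < dim_row (1\<^sub>m n :: real mat)" "k < dim_col (1\<^sub>m n :: real mat)"
    then have mk': "m < n" "k < n" by auto
    have dl: "(\<Sum>l<n. if l = m \<and> l = k then 1 else 0) = (if m = k then 1 else (0::real))"
      using mk' by (cases "m = k") (auto intro: sum.neutral)
    have "(transpose_mat W * W) $$ (m,k) = (\<Sum>l<n. F l m * F l k)"
      using mk' by (simp add: W_def scalar_prod_def atLeast0LessThan)
    also have "\<dots> = (\<Sum>l<n. (if l = m \<and> l = k then 1 else 0)
        + (if l = m then w l * A k + u l * B k else 0)
        + (if l = k then w l * A m + u l * B m else 0)
        + (A m * A k) * (w l * w l) + (A m * B k + B m * A k) * (w l * u l)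
        + (B m * B k) * (u l * u l))"
      by (intro sum.cong refl) (auto simp: F_def algebra_simps)
    also have "\<dots> = (if m = k then 1 else 0) + (w m * A k + u m * B k) + (w k * A m + u k * B m)
        + (A m * A k) * d + (A m * B k + B m * A k) * 0 + (B m * B k) * d"
      using mk' by (simp add: sum.distrib sum_distrib_left[symmetric] d_def wu uu dl)
    also have "\<dots> = (if m = k then 1 else 0) + (2 * \<alpha> + d * (\<alpha>^2 + \<beta>^2)) * (w m * w k + u m * u k)"
      unfolding A_def B_def by (simp add: algebra_simps power2_eq_square)
    also have "\<dots> = 1\<^sub>m n $$ (m,k)" using key mk' by simp
    finally show "(transpose_mat W * W) $$ (m,k) = 1\<^sub>m n $$ (m,k)" .
  qed (use Wc in auto)
  have comm: "Omega S * W = W * Omega S"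
  proof (rule eq_matI)
    fix m k assume mk: "m < dim_row (W * Omega S)" "k < dim_col (W * Omega S)"
    then have mk': "m < n" "k < n" using Wc by (auto simp: n_def Omega_def)
    have "(Omega S * W) $$ (m,k) = (\<Sum>l<2*S. Omega S $$ (m,l) * F l k)"
      using mk' by (simp add: W_def scalar_prod_def atLeast0LessThan n_def Omega_def)
    also have "\<dots> = kv (\<lambda>l. F l k) m" using mk' by (simp add: sum_Omega_left n_def)
    finally have L: "(Omega S * W) $$ (m,k) = kv (\<lambda>l. F l k) m" .
    have "(W * Omega S) $$ (m,k) = (\<Sum>l<2*S. F m l * Omega S $$ (l,k))"
      using mk' by (simp add: W_def scalar_prod_def atLeast0LessThan n_def Omega_def)
    also have "\<dots> = - kv (\<lambda>l. F m l) k" using mk' by (simp add: sum_Omega_right n_def)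
    finally have R: "(W * Omega S) $$ (m,k) = - kv (\<lambda>l. F m l) k" .
    show "(Omega S * W) $$ (m,k) = (W * Omega S) $$ (m,k)" unfolding L R
      by (cases "even m"; cases "even k")
        (auto simp: kv_def F_def A_def B_def u_def algebra_simps)
  qed (use Wc in \<open>auto simp: n_def Omega_def\<close>)
  have Oc: "Omega S \<in> carrier_mat n n" by (simp add: n_def)
  have sym: "transpose_mat W * Omega S * W = Omega S"
  proof -
    have "transpose_mat W * Omega S * W = transpose_mat W * (Omega S * W)"
      using Wc Oc by (intro assoc_mult_mat) auto
    also have "\<dots> = transpose_mat W * (W * Omega S)" by (simp add: comm)
    also have "\<dots> = (transpose_mat W * W) * Omega S"
      using Wc Oc by (intro assoc_mult_mat[symmetric]) auto
    also have "\<dots> = Omega S" using orth Oc by simp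
    finally show ?thesis .
  qed
  have WSpO: "W \<in> SpO S"
    using Wc orth sym unfolding SpO_def orthogonal_mat_def n_def by auto
  have Ay: "(\<Sum>k<n. A k * y k) = -1"
  proof -
    have "(\<Sum>k<n. A k * y k) = \<alpha> * p - \<beta> * q"
      unfolding A_def p_def q_def by (simp add: algebra_simps sum_subtractf sum_distrib_left)
    also have "\<dots> = - N / N" unfolding \<alpha>_def \<beta>_def N_def by (simp add: power2_eq_square add_divide_distrib diff_divide_distrib)
    finally show ?thesis using Npos by simp
  qed
  have By: "(\<Sum>k<n. B k * y k) = 0"
  proof -
    have "(\<Sum>k<n. B k * y k) = \<alpha> * q + \<beta> * p"
      unfolding B_def p_def q_def by (simp add: algebra_simps sum.distrib sum_distrib_left)
    also have "\<dots> = 0" unfolding \<alpha>_def \<beta>_def by (simp add: algebra_simps add_divide_distrib[symmetric])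
    finally show ?thesis .
  qed
  have Fy: "(\<Sum>k<n. F m k * y k) = r m" if "m < n" for m
  proof -
    have "(\<Sum>k<n. F m k * y k) = (\<Sum>k<n. (if k = m then y k else 0) + w m * (A k * y k) + u m * (B k * y k))"
      by (intro sum.cong refl) (auto simp: F_def algebra_simps)
    also have "\<dots> = (if m < n then y m else 0) + w m * (-1) + u m * 0"
      by (simp add: sum.distrib sum_distrib_left[symmetric] Ay By)
    also have "\<dots> = r m" using that by (simp add: w_def)
    finally show ?thesis .
  qed
  have sig: "\<sigma> * \<sigma> = 1" by (simp add: \<sigma>_def)
  have Fab: "F m a + F m b = sqrt 2 * \<sigma> * r m" if "m < n" for m
  proof -
    have "(\<Sum>k<n. F m k * y k) = (\<Sum>k\<in>{a,b}. F m k * (\<sigma> / sqrt 2))"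
      using ab by (intro sum.mono_neutral_cong_right) (auto simp: y_def y0_def)
    also have "\<dots> = \<sigma> / sqrt 2 * (F m a + F m b)" using ab by (simp add: algebra_simps)
    finally have e: "r m = \<sigma> / sqrt 2 * (F m a + F m b)" using Fy[OF that] by simp
    have "sqrt 2 * \<sigma> * r m = (\<sigma> * \<sigma>) * (sqrt 2 / sqrt 2) * (F m a + F m b)"
      unfolding e by (simp add: algebra_simps)
    also have "\<dots> = F m a + F m b" using sig by simp
    finally show ?thesis by simp
  qed
  have fin: "(Q * W) $$ (l', a) = -1 * (Q * W) $$ (l', b)" if "l' < n" "l' \<noteq> j - 1" for l'
  proof -
    have "(Q * W) $$ (l', a) + (Q * W) $$ (l', b) = (\<Sum>m<n. Q $$ (l',m) * (F m a + F m b))"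
      using that ab Qc by (simp add: W_def scalar_prod_def atLeast0LessThan sum.distrib algebra_simps)
    also have "\<dots> = sqrt 2 * \<sigma> * (\<Sum>m<n. Q $$ (l',m) * r m)"
      by (simp add: Fab sum_distrib_left algebra_simps)
    also have "\<dots> = 0" using rQ[OF that(1)] that(2) by simp
    finally show ?thesis by simp
  qed
  show ?thesis
  proof (intro bexI[OF _ WSpO] exI[of _ "-1"] conjI allI impI)
    fix l assume l: "1 \<le> l \<and> l \<le> 2 * S \<and> l \<noteq> j"
    then have "l - 1 < n" "l - 1 \<noteq> j - 1" using assms unfolding n_def by auto
    from fin[OF this] show "(Q * W) $$ (l - 1, 2 * i - 2) = - 1 * (Q * W) $$ (l - 1, 2 * i - 1)"
      unfolding a_def b_def .
  qed simp
qed

end
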